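(* Let $\mathbb{F}\in\{\mathbb{R},\mathbb{C}\}$, $p\in(0,1]$, let $k\in\{1,\dots,n\}$ be an integer, and let $r>0$ be a real number. Suppose $\boldsymbol A\in\mathbb{F}^{m\times n}$ satisfies the phaseless bi-Lipschitz condition on the set $\mathcal X=\{\boldsymbol x\in\mathbb{F}^n:\|\boldsymbol x\|_0\le (r+4)k\}$ with positive constants $L,U$, and that \[ L-U\cdot 2^{1/p-1}\cdot\Big(\frac{2}{r}\Big)^{1/p-1/2}>0 . \] Then there are positive constants $C_1,C_2,D_1,D_2$ depending only on $U,L,r,p$ such that for every $\boldsymbol x\in\mathbb{F}^n$, every $\eta\ge0$ and every $\boldsymbol e\in\mathbb{R}^m$ with $\|\boldsymbol e\|_2\le\eta$, any $\boldsymbol x^\#\in\Delta_{p,\eta}(|\boldsymbol A\boldsymbol x|+\boldsymbol e)$ satisfies \[ \mathrm{dist}_p(\boldsymbol x^\#,\boldsymbol x)\le C_1\,\sigma_k(\boldsymbol x)_p+D_1\,k^{1/p-1/2}\,\eta, \qquad \mathrm{dist}(\boldsymbol x^\#,\boldsymbol x)\le C_2\,\frac{\sigma_k(\boldsymbol x)_p}{k^{1/p-1/2}}+D_2\,\eta . \] Explicitly, with $\widetilde C_2=\dfrac{U\,(2^{1/p-1}r^{-(1/p-1/2)}+1)}{L-U2^{1/p-1}(2/r)^{1/p-1/2}}$, $\widetilde D_2=\dfrac{2}{L-U2^{1/p-1}(2/r)^{1/p-1/2}}$, $\widetilde C_1=(2+r)^{1-p/2}\widetilde C_2^{\,p}$,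 $\widetilde D_1=(2+r)^{1-p/2}\widetilde D_2^{\,p}$, one may take $C_1=2^{1/p-1}(2\widetilde C_1+2)^{1/p}$, $D_1=2^{1/p-1}\widetilde D_1^{1/p}$, $C_2=\big(1+2^{1/p-1}(r/2)^{-(1/p-1/2)}\big)\widetilde C_2+2^{1/p-1}r^{-(1/p-1/2)}+1$, $D_2=\big(1+2^{1/p-1}(r/2)^{-(1/p-1/2)}\big)\widetilde D_2$.
   Context: $\mathbb{F}\in\{\mathbb{R},\mathbb{C}\}$. For $q>0$, $\|\boldsymbol u\|_q=(\sum_i|u_i|^q)^{1/q}$ (a quasi-norm if $q<1$); $\|\boldsymbol u\|_0$ is the number of nonzero entries; $|\boldsymbol u|$ is the vector of entrywise moduli. For $\boldsymbol x,\boldsymbol y\in\mathbb{F}^n$ and $q>0$, $\mathrm{dist}_q(\boldsymbol x,\boldsymbol y)=\min_{c\in\mathbb{F},|c|=1}\|\boldsymbol x-c\boldsymbol y\|_q$ and $\mathrm{dist}=\mathrm{dist}_2$. $\Sigma_k=\{\boldsymbol z\in\mathbb{F}^n:\|\boldsymbol z\|_0\le k\}$ and $\sigma_k(\boldsymbol x)_q=\min_{\boldsymbol z\in\Sigma_k}\mathrm{dist}_q(\boldsymbol x,\boldsymbol z)$. A matrix $\boldsymbol A\in\mathbb{F}^{m\times n}$ satisfies the phaseless bi-Lipschitz condition on $\mathcal X\subset\mathbb{F}^n$ with positive constants $L,U$ if $L\,\mathrm{dist}(\boldsymbol x,\boldsymbol y)\le\||\boldsymbol A\boldsymbol x|-|\boldsymbol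 A\boldsymbol y|\|_2\le U\,\mathrm{dist}(\boldsymbol x,\boldsymbol y)$ for all $\boldsymbol x,\boldsymbol y\in\mathcal X$. For $p\in(0,1]$, $\eta\ge0$ and $\boldsymbol y\in\mathbb{R}^m$, the phaseless $\ell_p$-minimization decoder is $\Delta_{p,\eta}(\boldsymbol y)=\operatorname{argmin}_{\boldsymbol z\in\mathbb{F}^n}\{\|\boldsymbol z\|_p:\||\boldsymbol A\boldsymbol z|-\boldsymbol y\|_2\le\eta\}$ (the set of minimizers). *)

theory Defs
  imports "HOL-Analysis.Analysis"
begin

text \<open>Vectors in F^n are modelled as 'a^'n with 'a a real normed field
  (instantiated to real and complex in the main theorem); matrices as 'a^'n^'m.\<close>

definition lp_norm :: "real \<Rightarrow> 'a::real_normed_field ^ 'n \<Rightarrow> real" where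
  "lp_norm q u = (\<Sum>i\<in>UNIV. norm (u $ i) powr q) powr (1 / q)"

definition l0_norm :: "'a::zero ^ 'n \<Rightarrow> nat" where
  "l0_norm u = card {i. u $ i \<noteq> 0}"

definition absvec :: "'a::real_normed_field ^ 'n \<Rightarrow> real ^ 'n" where
  "absvec u = (\<chi> i. norm (u $ i))"

definition dist_q :: "real \<Rightarrow> 'a::real_normed_field ^ 'n \<Rightarrow> 'a ^ 'n \<Rightarrow> real" where
  "dist_q q x y = (INF c\<in>{c::'a. norm c = 1}. lp_norm q (x - (\<chi> i. c * y $ i)))"

abbreviation dist2 :: "'a::real_normed_field ^ 'n \<Rightarrow> 'a ^ 'n \<Rightarrow> real" where
  "dist2 x y \<equiv> dist_q 2 x y"

definition sparse_set :: "real \<Rightarrow> ('a::zero ^ 'n) set" where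
  "sparse_set s = {z. real (l0_norm z) \<le> s}"

definition sigma_k :: "nat \<Rightarrow> real \<Rightarrow> 'a::real_normed_field ^ 'n \<Rightarrow> real" where
  "sigma_k k q x = (INF z\<in>sparse_set (real k). dist_q q x z)"

definition phaseless_bilip ::
  "'a::real_normed_field ^ 'n ^ 'm \<Rightarrow> ('a ^ 'n) set \<Rightarrow> real \<Rightarrow> real \<Rightarrow> bool" where
  "phaseless_bilip A X L U \<longleftrightarrow> 0 < L \<and> 0 < U \<and>
     (\<forall>x\<in>X. \<forall>y\<in>X. L * dist2 x y \<le> norm (absvec (A *v x) - absvec (A *v y))
                  \<and> norm (absvec (A *v x) - absvec (A *v y)) \<le> U * dist2 x y)"

text \<open>Phaseless l_p decoder: the set of minimizers (norm on real^'m is the Euclidean 2-norm).\<close>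
definition Delta :: "'a::real_normed_field ^ 'n ^ 'm \<Rightarrow> real \<Rightarrow> real \<Rightarrow> real ^ 'm \<Rightarrow> ('a ^ 'n) set" where
  "Delta A p eta y = {z. norm (absvec (A *v z) - y) \<le> eta \<and>
      (\<forall>w. norm (absvec (A *v w) - y) \<le> eta \<longrightarrow> lp_norm p z \<le> lp_norm p w)}"

definition den :: "real \<Rightarrow> real \<Rightarrow> real \<Rightarrow> real \<Rightarrow> real" where
  "den L U r p = L - U * 2 powr (1/p - 1) * (2 / r) powr (1/p - 1/2)"

definition Ct2 :: "real \<Rightarrow> real \<Rightarrow> real \<Rightarrow> real \<Rightarrow> real" where
  "Ct2 L U r p = U * (2 powr (1/p - 1) * r powr (-(1/p - 1/2)) + 1) / den L U r p"

definition Dt2 :: "real \<Rightarrow> real \<Rightarrow> real \<Rightarrow> real \<Rightarrow> real" where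
  "Dt2 L U r p = 2 / den L U r p"

definition Ct1 :: "real \<Rightarrow> real \<Rightarrow> real \<Rightarrow> real \<Rightarrow> real" where
  "Ct1 L U r p = (2 + r) powr (1 - p/2) * Ct2 L U r p powr p"

definition Dt1 :: "real \<Rightarrow> real \<Rightarrow> real \<Rightarrow> real \<Rightarrow> real" where
  "Dt1 L U r p = (2 + r) powr (1 - p/2) * Dt2 L U r p powr p"

definition C1 :: "real \<Rightarrow> real \<Rightarrow> real \<Rightarrow> real \<Rightarrow> real" where
  "C1 L U r p = 2 powr (1/p - 1) * (2 * Ct1 L U r p + 2) powr (1/p)"

definition D1 :: "real \<Rightarrow> real \<Rightarrow> real \<Rightarrow> real \<Rightarrow> real" where
  "D1 L U r p = 2 powr (1/p - 1) * Dt1 L U r p powr (1/p)"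

definition C2 :: "real \<Rightarrow> real \<Rightarrow> real \<Rightarrow> real \<Rightarrow> real" where
  "C2 L U r p = (1 + 2 powr (1/p - 1) * (r/2) powr (-(1/p - 1/2))) * Ct2 L U r p
                + 2 powr (1/p - 1) * r powr (-(1/p - 1/2)) + 1"

definition D2 :: "real \<Rightarrow> real \<Rightarrow> real \<Rightarrow> real \<Rightarrow> real" where
  "D2 L U r p = (1 + 2 powr (1/p - 1) * (r/2) powr (-(1/p - 1/2))) * Dt2 L U r p"

end

theory Submission
  imports Defs
begin


lemma pw_subadd:
  fixes a b p :: real
  assumes "0 < p" "p \<le> 1" "0 \<le> a" "0 \<le> b"
  shows "(a + b) powr p \<le> a powr p + b powr p"
proof (cases "a + b = 0")
  case True then show ?thesis using assms by simp
next
  case False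
  then have s: "a + b > 0" using assms by linarith
  have ha: "a / (a+b) \<le> (a/(a+b)) powr p"
  proof -
    have "(a/(a+b)) powr 1 \<le> (a/(a+b)) powr p"
      using assms s by (intro powr_mono') (auto simp: divide_le_eq_1)
    then show ?thesis using assms s by simp
  qed
  have hb: "b / (a+b) \<le> (b/(a+b)) powr p"
  proof -
    have "(b/(a+b)) powr 1 \<le> (b/(a+b)) powr p"
      using assms s by (intro powr_mono') (auto simp: divide_le_eq_1)
    then show ?thesis using assms s by simp
  qed
  have "1 = a/(a+b) + b/(a+b)" using s by (simp add: add_divide_distrib[symmetric])
  also have "\<dots> \<le> (a powr p + b powr p) / (a+b) powr p"
    using ha hb assms s by (simp add: powr_divide add_divide_distrib)
  finally show ?thesis using s by (simp add: le_divide_eq)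
qed

lemma pw_conv2:
  fixes X Y q :: real
  assumes "1 \<le> q" "0 \<le> X" "0 \<le> Y"
  shows "(X + Y) powr q \<le> 2 powr (q - 1) * (X powr q + Y powr q)"
proof -
  have g1: "1 \<le> (2::real) powr (q - 1)" by (rule ge_one_powr_ge_zero) (use assms in auto)
  consider "X = 0" | "Y = 0" | "X > 0" "Y > 0" using assms by linarith
  then show ?thesis
  proof cases
    case 1 then show ?thesis using g1 assms
      by (simp add: mult_le_cancel_right1 ge_one_powr_ge_zero)
  next
    case 2 then show ?thesis using g1 assms
      by (simp add: mult_le_cancel_right1 ge_one_powr_ge_zero)
  next
    case 3
    have c: "convex_on {0<..} (\<lambda>x::real. x powr q)" using powr_convex assms by blast
    have "((1/2) *\<^sub>R X + (1 - 1/2) *\<^sub>R Y) powr q \<le> (1/2) * X powr q + (1 - 1/2) * Y powr q"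
      using convex_onD[OF c, of "1/2" X Y] 3 by simp
    then have h: "((X + Y)/2) powr q \<le> (X powr q + Y powr q)/2" by (simp add: field_simps)
    have "(X + Y) powr q = 2 powr q * ((X+Y)/2) powr q"
      using 3 by (simp add: powr_divide)
    also have "\<dots> \<le> 2 powr q * ((X powr q + Y powr q)/2)"
      using h by (intro mult_left_mono) auto
    also have "\<dots> = 2 powr (q - 1) * (X powr q + Y powr q)"
      by (simp add: powr_diff)
    finally show ?thesis .
  qed
qed

lemma pw_mean:
  fixes z :: "'i \<Rightarrow> real" and q :: real
  assumes "0 < q" "q \<le> 1" "finite S" "\<And>i. i \<in> S \<Longrightarrow> 0 \<le> z i"
  shows "(\<Sum>i\<in>S. z i powr q) \<le> real (card S) powr (1 - q) * (\<Sum>i\<in>S. z i) powr q"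
proof (cases "(\<Sum>i\<in>S. z i) = 0")
  case True
  then have "\<forall>i\<in>S. z i = 0" using sum_nonneg_eq_0_iff assms by blast
  then show ?thesis using assms by simp
next
  case False
  define Z where "Z = (\<Sum>i\<in>S. z i)"
  have Zp: "Z > 0" using False assms sum_nonneg unfolding Z_def by (metis order_le_less)
  have Sne: "S \<noteq> {}" using False by auto
  define n where "n = real (card S)"
  have np: "n > 0" using Sne assms unfolding n_def by (simp add: card_gt_0_iff)
  define y0 where "y0 = Z / n"
  have y0p: "y0 > 0" using Zp np unfolding y0_def by simp
  have tang: "z i powr q \<le> y0 powr q + q * y0 powr (q - 1) * (z i - y0)" if "i \<in> S" for i
  proof (cases "z i = 0")
    case True
    have e: "y0 powr (q-1) = y0 powr q / y0" using y0p by (simp add: powr_diff)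
    have "y0 powr q + q * y0 powr (q - 1) * (z i - y0) = (1 - q) * y0 powr q"
      using y0p True unfolding e by (simp add: field_simps)
    moreover have "(1 - q) * y0 powr q \<ge> 0" using assms by simp
    ultimately show ?thesis using True assms by simp
  next
    case False
    then have zp: "z i > 0" using assms(4)[OF that] by linarith
    have "(z i / y0) powr q * 1 powr (1 - q) \<le> q * (z i / y0) + (1 - q) * 1"
      using Youngs_inequality_0[of q "1-q" "z i / y0" 1] assms zp y0p by simp
    then have "(z i) powr q / y0 powr q \<le> q * (z i / y0) + (1 - q)"
      using zp y0p by (simp add: powr_divide)
    then have "z i powr q \<le> y0 powr q * (q * (z i / y0) + (1 - q))"
      using y0p by (simp add: divide_le_eq mult.commute)
    also have "\<dots> = y0 powr q + q * y0 powr (q - 1) * (z i - y0)"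
      using y0p by (simp add: powr_diff field_simps)
    finally show ?thesis .
  qed
  have "(\<Sum>i\<in>S. z i powr q) \<le> (\<Sum>i\<in>S. y0 powr q + q * y0 powr (q - 1) * (z i - y0))"
    using tang by (intro sum_mono) auto
  also have "\<dots> = n * y0 powr q + q * y0 powr (q-1) * (Z - n * y0)"
    unfolding n_def Z_def by (simp add: sum.distrib sum_distrib_left sum_distrib_right sum_subtractf algebra_simps)
  also have "\<dots> = n * y0 powr q" using np unfolding y0_def by simp
  also have "\<dots> = n powr (1 - q) * Z powr q"
    using np Zp unfolding y0_def by (simp add: powr_divide powr_diff field_simps)
  finally show ?thesis unfolding n_def Z_def .
qed



definition rst :: "'n set \<Rightarrow> 'a::zero ^ 'n \<Rightarrow> 'a ^ 'n" where
  "rst T v = (\<chi> i. if i \<in> T then v $ i else 0)"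

definition psum :: "real \<Rightarrow> 'a::real_normed_field ^ 'n \<Rightarrow> 'n set \<Rightarrow> real" where
  "psum p v T = (\<Sum>i\<in>T. norm (v $ i) powr p)"

lemma psum_nonneg: "0 \<le> psum p v T"
  unfolding psum_def by (simp add: sum_nonneg)

lemma psum_union: "A \<inter> B = {} \<Longrightarrow> psum p v (A \<union> B) = psum p v A + psum p v B"
  unfolding psum_def by (simp add: sum.union_disjoint)

lemma psum_compl: "psum p v UNIV = psum p v T + psum p v (- T)"
  using psum_union[of T "-T" p v] by (simp add: Compl_partition)

lemma rst_nth[simp]: "rst T v $ i = (if i \<in> T then v $ i else 0)"
  unfolding rst_def by simp

lemma rst_add: "A \<inter> B = {} \<Longrightarrow> rst (A \<union> B) v = rst A v + rst B (v::'a::monoid_add^'n)"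
  by (auto simp: vec_eq_iff)

lemma rst_UNIV[simp]: "rst UNIV v = v"
  by (auto simp: vec_eq_iff)

lemma rst_compl: "v - rst T v = rst (- T) (v::'a::ab_group_add^'n)"
  by (auto simp: vec_eq_iff)

lemma l0_rst: "l0_norm (rst T v) \<le> card T"
  unfolding l0_norm_def by (rule card_mono) auto

lemma norm_sq_vec: "(norm (v::'a::real_normed_vector^'n))\<^sup>2 = (\<Sum>i\<in>UNIV. (norm (v $ i))\<^sup>2)"
  unfolding norm_vec_def L2_set_def by (simp add: sum_nonneg)

lemma norm_sq_rst: "(norm (rst T (v::'a::real_normed_field^'n)))\<^sup>2 = (\<Sum>i\<in>T. (norm (v $ i))\<^sup>2)"
proof -
  have "(\<Sum>i\<in>UNIV. (norm (rst T v $ i))\<^sup>2) = (\<Sum>i\<in>UNIV. if i \<in> T then (norm (v $ i))\<^sup>2 else 0)"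
    by (rule sum.cong) auto
  also have "\<dots> = (\<Sum>i\<in>T. (norm (v $ i))\<^sup>2)" by (simp add: sum.If_cases)
  finally show ?thesis unfolding norm_sq_vec .
qed

lemma norm_rst_le:
  assumes "\<And>i. i \<in> T \<Longrightarrow> norm (v $ i) \<le> M"
  shows "norm (rst T (v::'a::real_normed_field^'n)) \<le> sqrt (real (card T)) * M"
proof (cases "T = {}")
  case True
  have "rst T v = 0" using True by (simp add: vec_eq_iff)
  then show ?thesis using True by simp
next
  case False
  obtain i0 where "i0 \<in> T" using False by blast
  then have M0: "0 \<le> M" using assms[of i0] norm_ge_zero[of "v $ i0"] by linarith
  have "(norm (rst T v))\<^sup>2 \<le> (\<Sum>i\<in>T. M\<^sup>2)"
    unfolding norm_sq_rst
  proof (rule sum_mono)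
    fix i assume "i \<in> T"
    then show "(norm (v $ i))\<^sup>2 \<le> M\<^sup>2" using assms[of i] by (simp add: power_mono)
  qed
  also have "\<dots> = real (card T) * M\<^sup>2" by simp
  also have "\<dots> = (sqrt (real (card T)) * M)\<^sup>2" by (simp add: power_mult_distrib)
  finally have h: "(norm (rst T v))\<^sup>2 \<le> (sqrt (real (card T)) * M)\<^sup>2" .
  show ?thesis by (rule power2_le_imp_le[OF h]) (use M0 in simp)
qed

lemma lp2_norm: "lp_norm 2 (v::'a::real_normed_field^'n) = norm v"
  unfolding lp_norm_def norm_vec_def L2_set_def
  by (simp add: powr_half_sqrt[symmetric] sum_nonneg)

lemma lp_norm_psum: "lp_norm p v = psum p v UNIV powr (1/p)"
  unfolding lp_norm_def psum_def by simp

lemma lp_norm_nonneg: "0 \<le> lp_norm p v"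
  unfolding lp_norm_def by simp

lemma dist_q_le:
  assumes "norm (c::'a::real_normed_field) = 1"
  shows "dist_q q x y \<le> lp_norm q (x - (\<chi> i. c * y $ i))"
  unfolding dist_q_def
  by (rule cINF_lower) (auto intro!: bdd_belowI2[where m=0] simp: lp_norm_nonneg assms)

lemma dist_q_ge:
  assumes "\<And>c::'a::real_normed_field. norm c = 1 \<Longrightarrow> b \<le> lp_norm q (x - (\<chi> i. c * y $ i))"
  shows "b \<le> dist_q q x y"
  unfolding dist_q_def
  by (rule cINF_greatest) (use assms in \<open>auto intro: exI[of _ 1]\<close>)

lemma dist_q_zero: "dist_q q x (0::'a::real_normed_field^'n) = lp_norm q x"
proof -
  have "{c::'a. norm c = 1} \<noteq> {}" by (auto intro: exI[of _ 1])
  moreover have "(\<chi> i. c * (0::'a^'n) $ i) = 0" for c by (simp add: vec_eq_iff)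
  ultimately show ?thesis unfolding dist_q_def by simp
qed

lemma dist2_attain:
  fixes x y :: "'a::{real_normed_field,heine_borel}^'n"
  shows "\<exists>c. norm c = 1 \<and> dist2 x y = norm (x - (\<chi> i. c * y $ i))"
proof -
  have eq: "(\<chi> i. c * y $ i) = c *s y" for c by (simp add: vec_eq_iff)
  have cont0: "continuous_on (sphere 0 1) (\<lambda>c::'a. norm (x - (\<chi> i. c * y $ i)))"
    by (intro continuous_intros)
  have cont: "continuous_on (sphere 0 1) (\<lambda>c::'a. norm (x - c *s y))"
    using cont0 unfolding eq .
  have ne: "sphere (0::'a) 1 \<noteq> {}" by (auto intro: exI[of _ 1])
  obtain c where c: "c \<in> sphere 0 1" "\<And>d. d \<in> sphere 0 1 \<Longrightarrow> norm (x - c *s y) \<le> norm (x - d *s y)"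
    using continuous_attains_inf[OF compact_sphere ne cont] by blast
  have n1: "norm c = 1" using c by simp
  have a1: "dist2 x y \<le> norm (x - c *s y)" using dist_q_le[OF n1, of 2 x y] by (simp add: eq lp2_norm)
  have a2: "norm (x - c *s y) \<le> dist2 x y"
    by (rule dist_q_ge) (use c in \<open>auto simp: eq lp2_norm\<close>)
  have "dist2 x y = norm (x - (\<chi> i. c * y $ i))" using a1 a2 unfolding eq by linarith
  then show ?thesis using n1 by blast
qed

lemma absvec_lip: "norm (absvec a - absvec b) \<le> norm (a - (b::'a::real_normed_field^'m))"
  unfolding norm_vec_def absvec_def
  by (intro L2_set_mono) (auto simp: norm_triangle_ineq3)

lemma absvec_norm: "norm (absvec (a::'a::real_normed_field^'m)) = norm a"
  unfolding norm_vec_def absvec_def by simp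

lemma absvec_zero: "absvec (0::'a::real_normed_field^'m) = 0"
  unfolding absvec_def by (simp add: vec_eq_iff)



lemma top_set:
  fixes g :: "'i \<Rightarrow> real"
  assumes "finite W" "m \<le> card W"
  obtains B where "B \<subseteq> W" "card B = m" "\<forall>i\<in>B. \<forall>j\<in>W-B. g j \<le> g i"
    "\<forall>B'. B' \<subseteq> W \<and> card B' = m \<longrightarrow> sum g B' \<le> sum g B"
proof -
  define F where "F = {B. B \<subseteq> W \<and> card B = m}"
  have fF: "finite F" unfolding F_def using assms(1) by (rule rev_finite_subset[OF finite_Pow_iff[THEN iffD2]]) auto
  have neF: "F \<noteq> {}" unfolding F_def using obtain_subset_with_card_n[OF assms(2)] by blast
  have "Max (sum g ` F) \<in> sum g ` F" using fF neF by (intro Max_in) auto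
  then obtain B where BF: "B \<in> F" and Bmax: "sum g B = Max (sum g ` F)" by auto
  have ge: "sum g B' \<le> sum g B" if "B' \<in> F" for B'
    unfolding Bmax using fF that by (intro Max_ge) auto
  have BW: "B \<subseteq> W" "card B = m" using BF unfolding F_def by auto
  have fB: "finite B" using BW(1) assms(1) finite_subset by blast
  have swap: "g j \<le> g i" if ij: "i \<in> B" "j \<in> W - B" for i j
  proof (rule ccontr)
    assume "\<not> g j \<le> g i"
    then have lt: "g i < g j" by simp
    define B' where "B' = insert j (B - {i})"
    have "card B' = card B" unfolding B'_def using ij fB
      by (simp add: card_Diff_singleton) (metis One_nat_def Suc_pred card_gt_0_iff empty_iff)
    moreover have "B' \<subseteq> W" unfolding B'_def using ij BW by auto
    ultimately have "B' \<in> F" using BW unfolding F_def by simp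
    then have le: "sum g B' \<le> sum g B" by (rule ge)
    have "sum g B' = g j + sum g (B - {i})" unfolding B'_def using ij fB by simp
    also have "\<dots> = g j + sum g B - g i" using ij fB by (simp add: sum_diff1)
    finally show False using le lt by linarith
  qed
  show ?thesis
    using that[OF BW(1) BW(2)] swap ge unfolding F_def by blast
qed

lemma superadd:
  fixes a b p :: real
  assumes "0 < p" "p \<le> 1" "0 \<le> a" "0 \<le> b"
  shows "a powr (1/p) + b powr (1/p) \<le> (a + b) powr (1/p)"
proof -
  define A where "A = a powr (1/p)"
  define B where "B = b powr (1/p)"
  have "(A + B) powr p \<le> A powr p + B powr p"
    using pw_subadd[of p A B] assms unfolding A_def B_def by simp
  also have "A powr p = a" unfolding A_def using assms by (simp add: powr_powr)
  also have "B powr p = b" unfolding B_def using assms by (simp add: powr_powr)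
  finally have h: "(A + B) powr p \<le> a + b" .
  have "A + B = ((A + B) powr p) powr (1/p)"
    unfolding A_def B_def using assms by (simp add: powr_powr)
  also have "\<dots> \<le> (a + b) powr (1/p)"
    using h assms by (intro powr_mono2) auto
  finally show ?thesis unfolding A_def B_def .
qed

lemma block:
  fixes w :: "'a::real_normed_field^'n" and G :: "'a^'n \<Rightarrow> real" and t :: nat and p K :: real
  assumes p: "0 < p" "p \<le> 1" and t: "1 \<le> t" and K: "0 \<le> K"
    and Gsub: "\<And>a b. G (a + b) \<le> G a + G b"
    and Gsp: "\<And>z. l0_norm z \<le> t \<Longrightarrow> G z \<le> K * norm z"
  shows "\<exists>B \<subseteq> W. card B \<le> t \<and>
           G (rst (W - B) w) \<le> K * real t powr (-(1/p - 1/2)) * psum p w W powr (1/p)"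
proof (induction "card W" arbitrary: W rule: less_induct)
  case less
  define \<tau> where "\<tau> = real t powr (-(1/p - 1/2))"
  have tau0: "0 \<le> \<tau>" unfolding \<tau>_def by simp
  have G0: "G 0 \<le> 0" using Gsp[of 0] by (simp add: l0_norm_def)
  have rhs0: "0 \<le> K * \<tau> * psum p w W powr (1/p)" using K tau0 by simp
  show ?case
  proof (cases "card W \<le> t")
    case True
    have "rst (W - W) w = 0" by (simp add: vec_eq_iff)
    then show ?thesis using True G0 rhs0 unfolding \<tau>_def by (intro exI[of _ W]) auto
  next
    case False
    have fW: "finite W" by simp
    obtain B where B: "B \<subseteq> W" "card B = t" "\<forall>i\<in>B. \<forall>j\<in>W-B. norm (w $ j) \<le> norm (w $ i)"
      using top_set[OF fW, of t "\<lambda>i. norm (w $ i)"] False by auto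
    define W' where "W' = W - B"
    have fB: "finite B" by simp
    have cW': "card W' < card W" unfolding W'_def using B t fW
      by (metis False card_Diff_subset card_mono diff_less finite_subset le_0_eq not_le not_one_le_zero zero_less_iff_neq_zero)
    obtain B' where B': "B' \<subseteq> W'" "card B' \<le> t"
      and IH: "G (rst (W' - B') w) \<le> K * real t powr (-(1/p - 1/2)) * psum p w W' powr (1/p)"
      using less(1)[OF cW'] by blast
    define \<mu> where "\<mu> = (psum p w B / real t) powr (1/p)"
    have tpos: "real t > 0" using t by simp
    have bound: "norm (w $ j) \<le> \<mu>" if j: "j \<in> B'" for j
    proof -
      have jW: "j \<in> W - B" using j B' unfolding W'_def by auto
      have "(\<Sum>i\<in>B. norm (w $ j) powr p) \<le> (\<Sum>i\<in>B. norm (w $ i) powr p)"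
        using B(3) jW p by (intro sum_mono powr_mono2) auto
      then have "real t * norm (w $ j) powr p \<le> psum p w B" using B(2) unfolding psum_def by simp
      then have h: "norm (w $ j) powr p \<le> psum p w B / real t" using tpos by (simp add: field_simps)
      have "norm (w $ j) = (norm (w $ j) powr p) powr (1/p)" using p by (simp add: powr_powr)
      also have "\<dots> \<le> \<mu>" unfolding \<mu>_def using h p by (intro powr_mono2) auto
      finally show ?thesis .
    qed
    have nB': "norm (rst B' w) \<le> sqrt (real (card B')) * \<mu>" by (rule norm_rst_le) (use bound in auto)
    have mu0: "0 \<le> \<mu>" unfolding \<mu>_def by simp
    have "sqrt (real (card B')) * \<mu> \<le> sqrt (real t) * \<mu>"
      using B'(2) mu0 by (intro mult_right_mono) auto
    also have "sqrt (real t) * \<mu> = \<tau> * psum p w B powr (1/p)"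
    proof -
      have "sqrt (real t) * \<mu> = real t powr (1/2) * (psum p w B powr (1/p) / real t powr (1/p))"
        unfolding \<mu>_def using tpos psum_nonneg[of p w B] by (simp add: powr_divide powr_half_sqrt)
      also have "\<dots> = (real t powr (1/2) / real t powr (1/p)) * psum p w B powr (1/p)" by simp
      also have "real t powr (1/2) / real t powr (1/p) = \<tau>"
        unfolding \<tau>_def using tpos by (simp add: powr_diff[symmetric])
      finally show ?thesis .
    qed
    finally have nB'2: "norm (rst B' w) \<le> \<tau> * psum p w B powr (1/p)" using nB' by linarith
    have split: "rst (W - B) w = rst B' w + rst (W' - B') w"
    proof -
      have h: "W - B = B' \<union> (W' - B')" using B' unfolding W'_def by auto
      have d: "B' \<inter> (W' - B') = {}" by auto
      show ?thesis unfolding h by (rule rst_add[OF d])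
    qed
    have "G (rst (W - B) w) \<le> G (rst B' w) + G (rst (W' - B') w)" unfolding split by (rule Gsub)
    also have "G (rst B' w) \<le> K * norm (rst B' w)"
      using Gsp l0_rst[of B' w] B'(2) order_trans by blast
    also have "K * norm (rst B' w) \<le> K * (\<tau> * psum p w B powr (1/p))"
      using nB'2 K by (intro mult_left_mono) auto
    also have "K * (\<tau> * psum p w B powr (1/p)) + G (rst (W' - B') w)
        \<le> K * (\<tau> * psum p w B powr (1/p)) + K * \<tau> * psum p w W' powr (1/p)"
      using IH unfolding \<tau>_def by simp
    also have "\<dots> = K * \<tau> * (psum p w B powr (1/p) + psum p w W' powr (1/p))" by (simp add: algebra_simps)
    also have "\<dots> \<le> K * \<tau> * (psum p w B + psum p w W') powr (1/p)"
      using K tau0 superadd[OF p psum_nonneg psum_nonneg] by (intro mult_left_mono) auto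
    also have "psum p w B + psum p w W' = psum p w W"
    proof -
      have "W = B \<union> W'" "B \<inter> W' = {}" using B(1) unfolding W'_def by auto
      then show ?thesis by (metis psum_union)
    qed
    finally show ?thesis using B unfolding \<tau>_def by (intro exI[of _ B]) auto
  qed
qed



lemma sparse_memI: "real (l0_norm z) \<le> s \<Longrightarrow> z \<in> sparse_set s"
  unfolding sparse_set_def by simp

lemma bilip_upper:
  fixes A :: "'a::real_normed_field^'n^'m"
  assumes "phaseless_bilip A X L U" "z \<in> X" "0 \<in> X"
  shows "norm (A *v z) \<le> U * norm z"
proof -
  have "norm (absvec (A *v z) - absvec (A *v 0)) \<le> U * dist2 z 0"
    using assms unfolding phaseless_bilip_def by blast
  then show ?thesis by (simp add: absvec_zero absvec_norm dist_q_zero lp2_norm)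
qed

lemma bilip_lower:
  fixes A :: "'a::real_normed_field^'n^'m"
  assumes "phaseless_bilip A X L U" "z \<in> X" "y \<in> X"
  shows "L * dist2 z y \<le> norm (absvec (A *v z) - absvec (A *v y))"
  using assms unfolding phaseless_bilip_def by blast

lemma bilip_LU:
  fixes A :: "'a::real_normed_field^'n^'m"
  assumes "phaseless_bilip A (sparse_set s) L U" "1 \<le> s"
  shows "L \<le> U"
proof -
  define z :: "'a^'n" where "z = rst {undefined} (\<chi> j. 1)"
  have nz: "norm z = 1"
  proof -
    have "(norm z)\<^sup>2 = 1" unfolding z_def norm_sq_rst by simp
    then show ?thesis using norm_ge_zero[of z] by (auto simp: power2_eq_1_iff)
  qed
  have l: "l0_norm z \<le> 1" using l0_rst[of "{undefined}" "\<chi> j. 1"] unfolding z_def by simp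
  have "real (l0_norm z) \<le> 1" using l by (metis of_nat_1 of_nat_mono)
  then have zX: "z \<in> sparse_set s" using assms(2) by (intro sparse_memI) linarith
  have oX: "(0::'a^'n) \<in> sparse_set s" using assms(2) by (intro sparse_memI) (simp add: l0_norm_def)
  have "L * dist2 z 0 \<le> norm (absvec (A *v z) - absvec (A *v 0))"
    using assms zX oX unfolding phaseless_bilip_def by blast
  also have "\<dots> \<le> U * dist2 z 0"
    using assms zX oX unfolding phaseless_bilip_def by blast
  finally show ?thesis using nz by (simp add: dist_q_zero lp2_norm)
qed

lemma sigma_lower:
  fixes x :: "'a::real_normed_field^'n"
  assumes p: "0 < p" and kn: "k \<le> CARD('n)" and S: "card S = k"
    and Smax: "\<forall>B'. card B' = k \<longrightarrow> psum p x B' \<le> psum p x S"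
  shows "psum p x (- S) powr (1/p) \<le> sigma_k k p x"
  unfolding sigma_k_def
proof (rule cINF_greatest)
  show "sparse_set (real k) \<noteq> ({}::('a^'n) set)"
  proof -
    have "(0::'a^'n) \<in> sparse_set (real k)" by (rule sparse_memI) (simp add: l0_norm_def)
    then show ?thesis by blast
  qed
next
  fix z :: "'a^'n" assume "z \<in> sparse_set (real k)"
  then have zk: "card {i. z $ i \<noteq> 0} \<le> k" unfolding sparse_set_def l0_norm_def by simp
  define Z where "Z = {i. z $ i \<noteq> 0}"
  have "card (- Z) = CARD('n) - card Z" using card_Diff_subset[of Z UNIV] by (simp add: Compl_eq_Diff_UNIV)
  then have "k - card Z \<le> card (- Z)" using kn by linarith
  then obtain Y where Y: "Y \<subseteq> - Z" "card Y = k - card Z" "finite Y"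
    using obtain_subset_with_card_n by blast
  define Z' where "Z' = Z \<union> Y"
  have dZ: "Z \<inter> Y = {}" using Y by blast
  have "card Z' = card Z + card Y" unfolding Z'_def by (rule card_Un_disjoint) (use Y dZ in auto)
  then have cZ': "card Z' = k" using Y zk unfolding Z_def by simp
  show "psum p x (- S) powr (1/p) \<le> dist_q p x z"
  proof (rule dist_q_ge)
    fix c :: 'a assume "norm c = 1"
    define d where "d = x - (\<chi> i. c * z $ i)"
    have "psum p x (- Z') = psum p d (- Z')"
      unfolding psum_def d_def Z'_def Z_def by (intro sum.cong) auto
    also have "\<dots> \<le> psum p d UNIV" using psum_compl[of p d Z'] psum_nonneg[of p d Z'] by linarith
    finally have h1: "psum p x (- Z') \<le> psum p d UNIV" .
    have "psum p x (- S) \<le> psum p x (- Z')"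
    proof -
      have "psum p x Z' \<le> psum p x S" using Smax cZ' by blast
      then show ?thesis using psum_compl[of p x S] psum_compl[of p x Z'] by linarith
    qed
    then have "psum p x (- S) \<le> psum p d UNIV" using h1 by linarith
    then have "psum p x (- S) powr (1/p) \<le> psum p d UNIV powr (1/p)"
      using p psum_nonneg by (intro powr_mono2) auto
    then show "psum p x (- S) powr (1/p) \<le> lp_norm p (x - (\<chi> i. c * z $ i))"
      unfolding lp_norm_psum d_def .
  qed
qed



lemma powr_p_inv: "0 < p \<Longrightarrow> 0 \<le> (X::real) \<Longrightarrow> (X powr (1/p)) powr p = X"
  by (simp add: powr_powr)

lemma powr_inv_p: "0 < p \<Longrightarrow> 0 \<le> (X::real) \<Longrightarrow> (X powr p) powr (1/p) = X"
  by (simp add: powr_powr)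

lemma sq_powr_half: "0 \<le> (D::real) \<Longrightarrow> (D\<^sup>2) powr (p/2) = D powr p"
proof (cases "D = 0")
  case True then show ?thesis by simp
next
  case False
  assume "0 \<le> D"
  then have Dp: "D > 0" using False by simp
  have "D\<^sup>2 = D powr 2" using Dp by (simp add: powr_realpow)
  then show ?thesis by (simp add: powr_powr)
qed

lemma consts_facts:
  fixes p r L U :: real
  assumes hp: "0 < p" "p \<le> 1" and hr: "0 < r" and hLU: "0 < L" "0 < U" "L \<le> U"
    and hcond: "L - U * 2 powr (1/p - 1) * (2 / r) powr (1/p - 1/2) > 0"
  shows "1 \<le> (2::real) powr (1/p - 1)"
    and "2 powr (1/p - 1) * (2 / r) powr (1/p - 1/2) < 1"
    and "2 < r"
    and "0 < den L U r p"
    and "0 < Ct2 L U r p" "0 < Dt2 L U r p" "0 < Ct1 L U r p" "0 < Dt1 L U r p"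
    and "0 < C1 L U r p" "0 < D1 L U r p" "0 < C2 L U r p" "0 < D2 L U r p"
    and "Ct2 L U r p powr p \<le> Ct1 L U r p"
    and "2 * Dt2 L U r p powr p \<le> Dt1 L U r p"
proof -
  define a where "a = (2::real) powr (1/p - 1)"
  define \<rho> where "\<rho> = (2 / r) powr (1/p - 1/2)"
  have ip: "1 \<le> 1/p" using hp by simp
  show a1: "1 \<le> (2::real) powr (1/p - 1)" by (rule ge_one_powr_ge_zero) (use ip in auto)
  have h0: "U * (a * \<rho>) < L" using hcond unfolding a_def \<rho>_def by (simp add: mult.assoc)
  have "U * (a * \<rho>) < U * 1" using h0 hLU(3) by simp
  then have ar: "a * \<rho> < 1" using hLU(2) mult_less_cancel_left_pos by blast
  then show "2 powr (1/p - 1) * (2 / r) powr (1/p - 1/2) < 1" unfolding a_def \<rho>_def .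
  have a1': "1 \<le> a" using a1 unfolding a_def .
  have \<rho>0: "0 \<le> \<rho>" unfolding \<rho>_def by simp
  have r1: "\<rho> < 1" using ar a1' \<rho>0 by (smt (verit) mult_le_cancel_right1)
  show r2: "2 < r"
  proof (rule ccontr)
    assume "\<not> 2 < r"
    then have "1 \<le> 2 / r" using hr by simp
    then have "1 \<le> \<rho>" unfolding \<rho>_def by (rule ge_one_powr_ge_zero) (use ip in auto)
    then show False using r1 by simp
  qed
  show den: "0 < den L U r p" using hcond unfolding den_def by simp
  have rb: "0 \<le> r powr (-(1/p - 1/2))" by simp
  show ct2: "0 < Ct2 L U r p" unfolding Ct2_def using den hLU rb a1
    by (intro divide_pos_pos mult_pos_pos) (auto intro: add_nonneg_pos)
  show dt2: "0 < Dt2 L U r p" unfolding Dt2_def using den by simp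
  have g1: "1 \<le> (2 + r) powr (1 - p/2)" by (rule ge_one_powr_ge_zero) (use hr hp in auto)
  show ct1: "0 < Ct1 L U r p" unfolding Ct1_def using ct2 g1 by (intro mult_pos_pos) auto
  show dt1: "0 < Dt1 L U r p" unfolding Dt1_def using dt2 g1 by (intro mult_pos_pos) auto
  show "0 < C1 L U r p" unfolding C1_def using ct1 by (intro mult_pos_pos) auto
  show "0 < D1 L U r p" unfolding D1_def using dt1 by (intro mult_pos_pos) auto
  show "0 < C2 L U r p" unfolding C2_def using ct2 a1 rb
    by (intro add_pos_nonneg add_nonneg_pos mult_pos_pos) (auto intro: add_pos_nonneg)
  show "0 < D2 L U r p" unfolding D2_def using dt2 a1
    by (intro mult_pos_pos) (auto intro: add_pos_nonneg)
  show "Ct2 L U r p powr p \<le> Ct1 L U r p" unfolding Ct1_def using g1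
    by (simp add: mult_le_cancel_right1)
  have g2: "2 \<le> (2 + r) powr (1 - p/2)"
  proof -
    have "(2::real) = 4 powr (1/2)" by (simp add: powr_half_sqrt)
    also have "\<dots> \<le> 4 powr (1 - p/2)" using hp by (intro powr_mono) auto
    also have "\<dots> \<le> (2 + r) powr (1 - p/2)" using r2 hp by (intro powr_mono2) auto
    finally show ?thesis .
  qed
  show "2 * Dt2 L U r p powr p \<le> Dt1 L U r p" unfolding Dt1_def using g2
    by (intro mult_right_mono) auto
qed



lemma norm_scale_vec: "norm c = 1 \<Longrightarrow> norm ((\<chi> i. c * z $ i) :: 'a::real_normed_field^'n) = norm z"
  unfolding norm_vec_def by (simp add: norm_mult)

lemma main_gen:
  fixes A :: "'a::{real_normed_field,heine_borel}^'n^'m" and p r L U :: real and k :: nat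
    and x xs :: "'a^'n" and e :: "real^'m" and eta :: real
  assumes hp: "0 < p" "p \<le> 1" and hk: "1 \<le> k" "k \<le> CARD('n)" and hr: "0 < r"
    and hLU: "0 < L" "0 < U"
    and hcond: "L - U * 2 powr (1/p - 1) * (2 / r) powr (1/p - 1/2) > 0"
    and bl: "phaseless_bilip A (sparse_set ((r + 4) * real k)) L U"
    and he: "0 \<le> eta" "norm e \<le> eta" and hxs: "xs \<in> Delta A p eta (absvec (A *v x) + e)"
  shows "dist_q p xs x \<le> C1 L U r p * sigma_k k p x + D1 L U r p * real k powr (1/p - 1/2) * eta \<and>
         dist2 xs x \<le> C2 L U r p * sigma_k k p x / real k powr (1/p - 1/2) + D2 L U r p * eta"
proof -
  define X where "X = (sparse_set ((r + 4) * real k) :: ('a^'n) set)"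
  define \<beta> where "\<beta> = 1/p - 1/2"
  define a where "a = (2::real) powr (1/p - 1)"
  define \<rho> where "\<rho> = (2/r) powr \<beta>"
  define s where "s = real k powr \<beta>"
  define K where "K = real k powr (1 - p/2)"
  have \<beta>0: "\<beta> > 0" unfolding \<beta>_def using hp by (simp add: field_simps)
  have kpos: "real k > 0" using hk by simp
  have s0: "s > 0" unfolding s_def using kpos by simp
  have K0: "K > 0" unfolding K_def using kpos by simp
  have e1: "(1/p - 1/2) * p = 1 - p/2" using hp by (simp add: field_simps)
  have e2: "(1 - p/2) * (1/p) = 1/p - 1/2" using hp by (simp add: field_simps)
  have sp: "s powr p = K" unfolding s_def K_def \<beta>_def by (simp only: powr_powr e1)
  have Ks: "K powr (1/p) = s" unfolding s_def K_def \<beta>_def by (simp only: powr_powr e2)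
  have one_le: "1 \<le> (r + 4) * real k"
  proof -
    have "1 * 1 \<le> (r + 4) * real k" by (rule mult_mono) (use hk hr in auto)
    then show ?thesis by simp
  qed
  have LU: "L \<le> U" using bilip_LU[OF bl one_le] .
  note CF = consts_facts[OF hp hr hLU LU hcond]
  have a1: "1 \<le> a" using CF(1) unfolding a_def .
  have ar: "a * \<rho> < 1" using CF(2) unfolding a_def \<rho>_def \<beta>_def .
  have r2: "2 < r" using CF(3) .
  have \<rho>0: "0 \<le> \<rho>" unfolding \<rho>_def by simp
  have den_eq: "den L U r p = L - U * a * \<rho>" unfolding den_def a_def \<rho>_def \<beta>_def ..
  have den0: "0 < den L U r p" using CF(4) .
  have XI: "z \<in> X" if "real (l0_norm z) \<le> (r + 4) * real k" for z
    unfolding X_def using that by (rule sparse_memI)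
  have X0: "0 \<in> X" using one_le by (intro XI) (simp add: l0_norm_def)
  have Aup: "norm (A *v z) \<le> U * norm z" if "z \<in> X" for z
    using bilip_upper[OF bl] that X0 unfolding X_def by blast

  define y where "y = absvec (A *v x) + e"
  have Dl: "norm (absvec (A *v xs) - y) \<le> eta \<and>
      (\<forall>w. norm (absvec (A *v w) - y) \<le> eta \<longrightarrow> lp_norm p xs \<le> lp_norm p w)"
    using hxs unfolding Delta_def y_def by blast
  have xfeas: "norm (absvec (A *v x) - y) \<le> eta" unfolding y_def using he by simp
  have lpx: "lp_norm p xs \<le> lp_norm p x" using Dl xfeas by blast
  have Pxs_le: "psum p xs UNIV \<le> psum p x UNIV"
  proof -
    have h: "(psum p xs UNIV powr (1/p)) powr p \<le> (psum p x UNIV powr (1/p)) powr p"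
    proof -
      have lpx': "psum p xs UNIV powr (1/p) \<le> psum p x UNIV powr (1/p)" using lpx unfolding lp_norm_psum .
      show ?thesis by (rule powr_mono2) (use lpx' hp in auto)
    qed
    show ?thesis using h powr_p_inv[OF hp(1) psum_nonneg[of p xs UNIV]]
        powr_p_inv[OF hp(1) psum_nonneg[of p x UNIV]] by linarith
  qed
  have meas: "norm (absvec (A *v xs) - absvec (A *v x)) \<le> 2 * eta"
  proof -
    have "absvec (A *v xs) - absvec (A *v x) = (absvec (A *v xs) - y) + e" unfolding y_def by simp
    then have "norm (absvec (A *v xs) - absvec (A *v x)) \<le> norm (absvec (A *v xs) - y) + norm e"
      by (metis norm_triangle_ineq)
    then show ?thesis using Dl he by linarith
  qed

  obtain S where S: "S \<subseteq> UNIV" "card S = k" "\<forall>i\<in>S. \<forall>j\<in>UNIV-S. norm (x $ j) powr p \<le> norm (x $ i) powr p"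
    "\<forall>B'. B' \<subseteq> UNIV \<and> card B' = k \<longrightarrow> (\<Sum>i\<in>B'. norm (x $ i) powr p) \<le> (\<Sum>i\<in>S. norm (x $ i) powr p)"
    using top_set[of UNIV k "\<lambda>i. norm (x $ i) powr p"] hk by auto
  have Smax: "\<forall>B'. card B' = k \<longrightarrow> psum p x B' \<le> psum p x S" using S(4) unfolding psum_def by blast
  define \<sigma> where "\<sigma> = psum p x (- S) powr (1/p)"
  have \<sigma>_le: "\<sigma> \<le> sigma_k k p x" unfolding \<sigma>_def by (rule sigma_lower[OF hp(1) hk(2) S(2) Smax])
  have \<sigma>0: "0 \<le> \<sigma>" unfolding \<sigma>_def by simp
  have \<sigma>p: "\<sigma> powr p = psum p x (- S)" unfolding \<sigma>_def by (rule powr_p_inv[OF hp(1) psum_nonneg])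

  define t where "t = nat \<lceil>r * real k / 2\<rceil>"
  define t2 where "t2 = nat \<lceil>r * real k\<rceil>"
  have t_ge: "r * real k / 2 \<le> real t" unfolding t_def by linarith
  have t_le: "real t \<le> r * real k / 2 + 1"
  proof -
    have h0: "0 \<le> r * real k / 2" using hr kpos by simp
    have "real t = real_of_int \<lceil>r * real k / 2\<rceil>" unfolding t_def using h0 by simp
    then show ?thesis using ceiling_correct[of "r * real k / 2"] by linarith
  qed
  have t2_ge: "r * real k \<le> real t2" unfolding t2_def by linarith
  have t2_le: "real t2 \<le> r * real k + 1"
  proof -
    have h0: "0 \<le> r * real k" using hr kpos by simp
    have "real t2 = real_of_int \<lceil>r * real k\<rceil>" unfolding t2_def using h0 by simp
    then show ?thesis using ceiling_correct[of "r * real k"] by linarith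
  qed
  have k1: "1 \<le> real k" using hk by simp
  have rk0: "0 \<le> r * real k" using hr kpos by simp
  have rk: "r \<le> r * real k" using mult_left_mono[OF k1, of r] hr by simp
  have dst: "(r + 4) * real k = r * real k + 4 * real k" by (simp add: algebra_simps)
  have "1 \<le> real t" using t_ge rk r2 by linarith
  then have t1: "1 \<le> t" by simp
  have "1 \<le> real t2" using t2_ge rk r2 by linarith
  then have t21: "1 \<le> t2" by simp
  have kt: "real (k + t) \<le> (r + 4) * real k"
    unfolding of_nat_add using t_le rk0 k1 dst by linarith
  have kt2: "real (k + t2) \<le> (r + 4) * real k"
    unfolding of_nat_add using t2_le rk0 k1 dst by linarith

  define G where "G = (\<lambda>z::'a^'n. max (norm (A *v z) / U) (norm z))"
  have Gsub: "G (z1 + z2) \<le> G z1 + G z2" for z1 z2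
  proof -
    have "norm (A *v (z1 + z2)) \<le> norm (A *v z1) + norm (A *v z2)"
      by (simp add: matrix_vector_right_distrib norm_triangle_ineq)
    then have "norm (A *v (z1 + z2)) / U \<le> norm (A *v z1) / U + norm (A *v z2) / U"
      using hLU by (simp add: add_divide_distrib[symmetric] divide_right_mono)
    moreover have "norm (z1 + z2) \<le> norm z1 + norm z2" by (rule norm_triangle_ineq)
    ultimately show ?thesis unfolding G_def by linarith
  qed
  have Gsp: "G z \<le> 1 * norm z" if "real (k + tt) \<le> (r + 4) * real k" "l0_norm z \<le> tt" for z tt
  proof -
    have "real (l0_norm z) \<le> (r + 4) * real k" using that by (smt (verit) of_nat_add of_nat_mono le_add2 order_trans)
    then have "norm (A *v z) \<le> U * norm z" using Aup XI by blast
    then have "norm (A *v z) / U \<le> norm z" using hLU by (simp add: divide_le_eq mult.commute)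
    then show ?thesis unfolding G_def by simp
  qed
  have GA: "norm (A *v z) \<le> U * G z" for z
  proof -
    have "norm (A *v z) = U * (norm (A *v z) / U)" using hLU by simp
    also have "\<dots> \<le> U * G z" unfolding G_def using hLU by (intro mult_left_mono) auto
    finally show ?thesis .
  qed
  have Gn: "norm z \<le> G z" for z unfolding G_def by simp

  obtain T1 where T1: "T1 \<subseteq> - S" "card T1 \<le> t"
      "G (rst (- S - T1) xs) \<le> 1 * real t powr (-(1/p - 1/2)) * psum p xs (- S) powr (1/p)"
    using block[where W="- S" and w=xs and t=t and K=1 and G=G and p=p, OF hp t1 _ Gsub Gsp[OF kt]] by auto
  obtain B1 where B1: "B1 \<subseteq> - S" "card B1 \<le> t2"
      "G (rst (- S - B1) x) \<le> 1 * real t2 powr (-(1/p - 1/2)) * psum p x (- S) powr (1/p)"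
    using block[where W="- S" and w=x and t=t2 and K=1 and G=G and p=p, OF hp t21 _ Gsub Gsp[OF kt2]] by auto
  define \<tau> where "\<tau> = real t powr (- \<beta>)"
  define \<tau>2 where "\<tau>2 = real t2 powr (- \<beta>)"
  define Pxs where "Pxs = psum p xs (- S) powr (1/p)"
  have \<tau>0: "0 \<le> \<tau>" unfolding \<tau>_def by simp
  have \<tau>20: "0 \<le> \<tau>2" unfolding \<tau>2_def by simp
  have Pxs0: "0 \<le> Pxs" unfolding Pxs_def by simp

  define u where "u = rst (S \<union> T1) xs"
  define ru where "ru = rst (- S - T1) xs"
  define v where "v = rst (S \<union> B1) x"
  define rv where "rv = rst (- S - B1) x"
  have Gru: "G ru \<le> \<tau> * Pxs" using T1(3) unfolding ru_def \<tau>_def Pxs_def \<beta>_def by simp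
  have Grv: "G rv \<le> \<tau>2 * \<sigma>" using B1(3) unfolding rv_def \<tau>2_def \<sigma>_def \<beta>_def by simp
  have xs_dec: "xs = u + ru" unfolding u_def ru_def by (auto simp: vec_eq_iff)
  have x_dec: "x = v + rv" unfolding v_def rv_def by (auto simp: vec_eq_iff)
  have uX: "u \<in> X"
  proof (rule XI)
    have "l0_norm u \<le> card (S \<union> T1)" unfolding u_def by (rule l0_rst)
    also have "\<dots> \<le> card S + card T1" by (rule card_Un_le)
    also have "\<dots> \<le> k + t" using S(2) T1(2) by simp
    finally show "real (l0_norm u) \<le> (r + 4) * real k" using kt by (smt (verit) of_nat_mono)
  qed
  have vX: "v \<in> X"
  proof (rule XI)
    have "l0_norm v \<le> card (S \<union> B1)" unfolding v_def by (rule l0_rst)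
    also have "\<dots> \<le> card S + card B1" by (rule card_Un_le)
    also have "\<dots> \<le> k + t2" using S(2) B1(2) by simp
    finally show "real (l0_norm v) \<le> (r + 4) * real k" using kt2 by (smt (verit) of_nat_mono)
  qed
  obtain c where c: "norm c = 1" "dist2 u v = norm (u - (\<chi> i. c * v $ i))"
    using dist2_attain by blast
  define D where "D = dist2 u v"
  define cv where "cv = (\<chi> i. c * v $ i)"
  have D_eq: "D = norm (u - cv)" using c(2) unfolding D_def cv_def .
  have D0: "0 \<le> D" using D_eq by simp

  have LD: "L * D \<le> U * (\<tau> * Pxs) + 2 * eta + U * (\<tau>2 * \<sigma>)"
  proof -
    have "L * D \<le> norm (absvec (A *v u) - absvec (A *v v))"
      unfolding D_def using bilip_lower[OF bl] uX vX unfolding X_def by blast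
    also have "absvec (A *v u) - absvec (A *v v) =
        (absvec (A *v u) - absvec (A *v xs)) + (absvec (A *v xs) - absvec (A *v x))
        + (absvec (A *v x) - absvec (A *v v))" by simp
    also have "norm \<dots> \<le> norm (absvec (A *v u) - absvec (A *v xs)) + norm (absvec (A *v xs) - absvec (A *v x))
        + norm (absvec (A *v x) - absvec (A *v v))"
      using norm_triangle_ineq[of "absvec (A *v u) - absvec (A *v xs) + (absvec (A *v xs) - absvec (A *v x))"
          "absvec (A *v x) - absvec (A *v v)"]
        norm_triangle_ineq[of "absvec (A *v u) - absvec (A *v xs)" "absvec (A *v xs) - absvec (A *v x)"]
      by linarith
    also have "norm (absvec (A *v u) - absvec (A *v xs)) \<le> norm (A *v ru)"
    proof -
      have "norm (absvec (A *v u) - absvec (A *v xs)) \<le> norm (A *v u - A *v xs)" by (rule absvec_lip)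
      also have "A *v u - A *v xs = - (A *v ru)"
        by (subst xs_dec) (simp add: matrix_vector_right_distrib)
      finally show ?thesis by simp
    qed
    also have "norm (absvec (A *v x) - absvec (A *v v)) \<le> norm (A *v rv)"
    proof -
      have "norm (absvec (A *v x) - absvec (A *v v)) \<le> norm (A *v x - A *v v)" by (rule absvec_lip)
      also have "A *v x - A *v v = A *v rv"
        by (subst x_dec) (simp add: matrix_vector_right_distrib)
      finally show ?thesis .
    qed
    finally have "L * D \<le> norm (A *v ru) + 2 * eta + norm (A *v rv)" using meas by linarith
    moreover have "norm (A *v ru) \<le> U * (\<tau> * Pxs)"
    proof -
      have "U * G ru \<le> U * (\<tau> * Pxs)" by (rule mult_left_mono[OF Gru]) (use hLU in simp)
      then show ?thesis using GA[of ru] by linarith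
    qed
    moreover have "norm (A *v rv) \<le> U * (\<tau>2 * \<sigma>)"
    proof -
      have "U * G rv \<le> U * (\<tau>2 * \<sigma>)" by (rule mult_left_mono[OF Grv]) (use hLU in simp)
      then show ?thesis using GA[of rv] by linarith
    qed
    ultimately show ?thesis by linarith
  qed

  define d where "d = xs - (\<chi> i. c * x $ i)"
  have dS: "d $ i = (u - cv) $ i" if "i \<in> S" for i
    using that unfolding d_def u_def cv_def v_def by simp
  have E_le: "psum p d S \<le> K * D powr p"
  proof -
    have "psum p d S = (\<Sum>i\<in>S. ((norm (d $ i))\<^sup>2) powr (p/2))"
      unfolding psum_def by (intro sum.cong) (auto simp: sq_powr_half)
    also have "\<dots> \<le> real (card S) powr (1 - p/2) * (\<Sum>i\<in>S. (norm (d $ i))\<^sup>2) powr (p/2)"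
      using hp by (intro pw_mean) auto
    also have "(\<Sum>i\<in>S. (norm (d $ i))\<^sup>2) \<le> D\<^sup>2"
    proof -
      have "(\<Sum>i\<in>S. (norm (d $ i))\<^sup>2) = (\<Sum>i\<in>S. (norm ((u - cv) $ i))\<^sup>2)"
        using dS by (intro sum.cong) auto
      also have "\<dots> \<le> (\<Sum>i\<in>UNIV. (norm ((u - cv) $ i))\<^sup>2)"
        by (intro sum_mono2) auto
      also have "\<dots> = D\<^sup>2" unfolding D_eq norm_sq_vec ..
      finally show ?thesis .
    qed
    then have "real (card S) powr (1 - p/2) * (\<Sum>i\<in>S. (norm (d $ i))\<^sup>2) powr (p/2)
        \<le> real (card S) powr (1 - p/2) * (D\<^sup>2) powr (p/2)"
      using hp by (intro mult_left_mono powr_mono2) (auto simp: sum_nonneg)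
    also have "\<dots> = K * D powr p" unfolding K_def S(2) using D0 by (simp add: sq_powr_half)
    finally show ?thesis .
  qed
  have cone1: "psum p x S - psum p xs S \<le> psum p d S"
  proof -
    have "norm (x $ i) powr p \<le> norm (xs $ i) powr p + norm (d $ i) powr p" for i
    proof -
      have "norm (x $ i) = norm (c * x $ i)" using c(1) by (simp add: norm_mult)
      also have "c * x $ i = xs $ i - d $ i" unfolding d_def by simp
      also have "norm (xs $ i - d $ i) \<le> norm (xs $ i) + norm (d $ i)" by (rule norm_triangle_ineq4)
      finally have "norm (x $ i) powr p \<le> (norm (xs $ i) + norm (d $ i)) powr p"
        using hp by (intro powr_mono2) auto
      also have "\<dots> \<le> norm (xs $ i) powr p + norm (d $ i) powr p" using hp by (intro pw_subadd) auto
      finally show ?thesis .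
    qed
    then have "psum p x S \<le> psum p xs S + psum p d S"
      unfolding psum_def by (simp add: sum.distrib[symmetric] sum_mono)
    then show ?thesis by linarith
  qed
  have cone: "psum p xs (- S) \<le> K * D powr p + \<sigma> powr p"
    using Pxs_le psum_compl[of p xs S] psum_compl[of p x S] cone1 E_le \<sigma>p by linarith
  have Pxs_bound: "Pxs \<le> a * (s * D + \<sigma>)"
  proof -
    have "Pxs \<le> (K * D powr p + \<sigma> powr p) powr (1/p)"
      unfolding Pxs_def using cone hp by (intro powr_mono2) (auto simp: psum_nonneg)
    also have "\<dots> \<le> 2 powr (1/p - 1) * ((K * D powr p) powr (1/p) + (\<sigma> powr p) powr (1/p))"
      using hp K0 by (intro pw_conv2) auto
    also have "(K * D powr p) powr (1/p) = s * D"
      using K0 D0 hp Ks by (simp add: powr_mult powr_inv_p)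
    also have "(\<sigma> powr p) powr (1/p) = \<sigma>" using \<sigma>0 hp by (simp add: powr_inv_p)
    finally show ?thesis unfolding a_def .
  qed
  have \<tau>s: "\<tau> * s \<le> \<rho>"
  proof -
    have tp: "real t > 0" using t1 by simp
    have "\<tau> * s = (real k / real t) powr \<beta>"
      unfolding \<tau>_def s_def using tp kpos by (simp add: powr_minus powr_divide field_simps)
    also have "\<dots> \<le> (2 / r) powr \<beta>"
    proof (rule powr_mono2)
      show "real k / real t \<le> 2 / r" using t_ge tp hr kpos by (simp add: field_simps)
    qed (use \<beta>0 kpos tp in auto)
    finally show ?thesis unfolding \<rho>_def .
  qed
  have \<tau>2s: "\<tau>2 * s \<le> r powr (- \<beta>)"
  proof -
    have tp: "real t2 > 0" using t21 by simp
    have "\<tau>2 * s = (real k / real t2) powr \<beta>"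
      unfolding \<tau>2_def s_def using tp kpos by (simp add: powr_minus powr_divide field_simps)
    also have "\<dots> \<le> (1 / r) powr \<beta>"
    proof (rule powr_mono2)
      show "real k / real t2 \<le> 1 / r" using t2_ge tp hr kpos by (simp add: field_simps)
    qed (use \<beta>0 kpos tp in auto)
    also have "\<dots> = r powr (- \<beta>)" by (simp add: powr_divide powr_minus_divide)
    finally show ?thesis .
  qed
  define ss where "ss = \<sigma> / s"
  have ss0: "0 \<le> ss" unfolding ss_def using \<sigma>0 s0 by simp
  have \<sigma>_eq: "\<sigma> = s * ss" unfolding ss_def using s0 by simp
  have \<tau>\<sigma>: "\<tau> * \<sigma> \<le> \<rho> * ss"
    unfolding \<sigma>_eq using \<tau>s ss0 by (simp add: mult.assoc[symmetric] mult_right_mono)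
  have \<tau>2\<sigma>: "\<tau>2 * \<sigma> \<le> r powr (- \<beta>) * ss"
    unfolding \<sigma>_eq using \<tau>2s ss0 by (simp add: mult.assoc[symmetric] mult_right_mono)
  have \<tau>Pxs: "\<tau> * Pxs \<le> a * \<rho> * D + a * \<rho> * ss"
  proof -
    have "\<tau> * Pxs \<le> \<tau> * (a * (s * D + \<sigma>))" using Pxs_bound \<tau>0 by (rule mult_left_mono)
    also have "\<dots> = a * ((\<tau> * s) * D) + a * (\<tau> * \<sigma>)" by (simp add: algebra_simps)
    also have "\<dots> \<le> a * (\<rho> * D) + a * (\<rho> * ss)"
      using \<tau>s \<tau>\<sigma> a1 D0 by (intro add_mono mult_left_mono mult_right_mono) auto
    finally show ?thesis by (simp add: mult.assoc)
  qed
  define rb where "rb = r powr (- \<beta>)"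
  have rb0: "0 \<le> rb" unfolding rb_def by simp
  have Dbound: "D \<le> Ct2 L U r p * ss + Dt2 L U r p * eta"
  proof -
    have "L * D \<le> U * (a * \<rho> * D + a * \<rho> * ss) + 2 * eta + U * (rb * ss)"
    proof -
      have "U * (\<tau> * Pxs) \<le> U * (a * \<rho> * D + a * \<rho> * ss)" using \<tau>Pxs hLU by (intro mult_left_mono) auto
      moreover have "U * (\<tau>2 * \<sigma>) \<le> U * (rb * ss)" using \<tau>2\<sigma> hLU unfolding rb_def by (intro mult_left_mono) auto
      ultimately show ?thesis using LD by linarith
    qed
    then have h1: "(L - U * a * \<rho>) * D \<le> U * (a * \<rho> + rb) * ss + 2 * eta" by (simp add: algebra_simps)
    have h2: "U * (a * \<rho> + rb) * ss \<le> U * (a * rb + 1) * ss"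
    proof -
      have "a * \<rho> + rb \<le> a * rb + 1" using ar a1 rb0 by (smt (verit) mult_le_cancel_right1)
      then show ?thesis using hLU ss0 by (intro mult_right_mono mult_left_mono) auto
    qed
    have "(L - U * a * \<rho>) * D \<le> U * (a * rb + 1) * ss + 2 * eta" using h1 h2 by linarith
    then have h: "den L U r p * D \<le> U * (a * rb + 1) * ss + 2 * eta" unfolding den_eq .
    have "D \<le> (U * (a * rb + 1) * ss + 2 * eta) / den L U r p"
      using h den0 by (simp add: le_divide_eq mult.commute)
    also have "\<dots> = Ct2 L U r p * ss + Dt2 L U r p * eta"
      unfolding Ct2_def Dt2_def rb_def a_def \<beta>_def by (simp add: add_divide_distrib)
    finally show ?thesis .
  qed

  have conc2: "dist2 xs x \<le> C2 L U r p * sigma_k k p x / real k powr (1/p - 1/2) + D2 L U r p * eta"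
  proof -
    have "dist2 xs x \<le> lp_norm 2 d" unfolding d_def by (rule dist_q_le[OF c(1)])
    also have "\<dots> = norm d" by (rule lp2_norm)
    also have "d = (u - cv) + ru - (\<chi> i. c * rv $ i)"
      unfolding d_def cv_def by (subst (1) xs_dec, subst (1) x_dec) (simp add: vec_eq_iff algebra_simps)
    also have "norm \<dots> \<le> D + norm ru + norm rv"
      using norm_triangle_ineq[of "u - cv" ru] norm_triangle_ineq4[of "(u - cv) + ru" "\<chi> i. c * rv $ i"]
        norm_scale_vec[OF c(1), of rv] D_eq by linarith
    also have "\<dots> \<le> D + (a * \<rho> * D + a * \<rho> * ss) + rb * ss"
      using Gn[of ru] Gru \<tau>Pxs Gn[of rv] Grv \<tau>2\<sigma> unfolding rb_def by linarith
    also have "\<dots> = (1 + a * \<rho>) * D + (a * \<rho> + rb) * ss" by (simp add: algebra_simps)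
    also have "\<dots> \<le> (1 + a * \<rho>) * (Ct2 L U r p * ss + Dt2 L U r p * eta) + (a * rb + 1) * ss"
    proof (rule add_mono)
      show "(1 + a * \<rho>) * D \<le> (1 + a * \<rho>) * (Ct2 L U r p * ss + Dt2 L U r p * eta)"
        using Dbound a1 \<rho>0 by (intro mult_left_mono) auto
      have "a * \<rho> + rb \<le> a * rb + 1" using ar a1 rb0 by (smt (verit) mult_le_cancel_right1)
      then show "(a * \<rho> + rb) * ss \<le> (a * rb + 1) * ss" using ss0 by (rule mult_right_mono)
    qed
    also have "\<dots> = C2 L U r p * ss + D2 L U r p * eta"
    proof -
      have "(r/2) powr (-(1/p - 1/2)) = \<rho>"
        unfolding \<rho>_def \<beta>_def using hr by (simp add: powr_minus powr_divide field_simps)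
      then show ?thesis unfolding C2_def D2_def rb_def a_def \<beta>_def by (simp add: algebra_simps)
    qed
    also have "\<dots> \<le> C2 L U r p * (sigma_k k p x / s) + D2 L U r p * eta"
      using CF(11,12) \<sigma>_le s0 unfolding ss_def by (intro add_mono mult_left_mono divide_right_mono) auto
    finally show ?thesis unfolding s_def \<beta>_def by simp
  qed

  have conc1: "dist_q p xs x \<le> C1 L U r p * sigma_k k p x + D1 L U r p * real k powr (1/p - 1/2) * eta"
  proof -
    have dnotS: "psum p d (- S) \<le> psum p xs (- S) + psum p x (- S)"
    proof -
      have "norm (d $ i) powr p \<le> norm (xs $ i) powr p + norm (x $ i) powr p" for i
      proof -
        have "norm (d $ i) \<le> norm (xs $ i) + norm (c * x $ i)" unfolding d_def by (simp add: norm_triangle_ineq4)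
        also have "norm (c * x $ i) = norm (x $ i)" using c(1) by (simp add: norm_mult)
        finally have "norm (d $ i) powr p \<le> (norm (xs $ i) + norm (x $ i)) powr p"
          using hp by (intro powr_mono2) auto
        also have "\<dots> \<le> norm (xs $ i) powr p + norm (x $ i) powr p" using hp by (intro pw_subadd) auto
        finally show ?thesis .
      qed
      then show ?thesis unfolding psum_def by (simp add: sum.distrib[symmetric] sum_mono)
    qed
    have Pd: "psum p d UNIV \<le> 2 * K * D powr p + 2 * \<sigma> powr p"
      using psum_compl[of p d S] E_le dnotS cone \<sigma>p by linarith
    have Dp: "D powr p \<le> (Ct2 L U r p * ss) powr p + (Dt2 L U r p * eta) powr p"
    proof -
      have "D powr p \<le> (Ct2 L U r p * ss + Dt2 L U r p * eta) powr p"
        using Dbound D0 hp by (intro powr_mono2) auto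
      also have "\<dots> \<le> (Ct2 L U r p * ss) powr p + (Dt2 L U r p * eta) powr p"
        using hp CF(5,6) ss0 he by (intro pw_subadd) auto
      finally show ?thesis .
    qed
    have KC: "K * (Ct2 L U r p * ss) powr p = Ct2 L U r p powr p * \<sigma> powr p"
    proof -
      have "\<sigma> powr p = (s * ss) powr p" using \<sigma>_eq by simp
      also have "\<dots> = K * ss powr p" using s0 ss0 sp by (simp add: powr_mult)
      finally have "\<sigma> powr p = K * ss powr p" .
      then show ?thesis using CF(5) ss0 by (simp add: powr_mult algebra_simps)
    qed
    have KD: "K * (Dt2 L U r p * eta) powr p = Dt2 L U r p powr p * (K * eta powr p)"
      using CF(6) he by (simp add: powr_mult algebra_simps)
    define Q1 where "Q1 = (2 * Ct1 L U r p + 2) * \<sigma> powr p"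
    define Q2 where "Q2 = Dt1 L U r p * (K * eta powr p)"
    have Q10: "0 \<le> Q1" unfolding Q1_def using CF(7) by simp
    have Q20: "0 \<le> Q2" unfolding Q2_def using CF(8) K0 by simp
    have PdQ: "psum p d UNIV \<le> Q1 + Q2"
    proof -
      have "psum p d UNIV \<le> 2 * (K * D powr p) + 2 * \<sigma> powr p" using Pd by simp
      also have "\<dots> \<le> 2 * (K * ((Ct2 L U r p * ss) powr p + (Dt2 L U r p * eta) powr p)) + 2 * \<sigma> powr p"
        using Dp K0 by (intro add_mono mult_left_mono) auto
      also have "\<dots> = 2 * (Ct2 L U r p powr p * \<sigma> powr p) + 2 * Dt2 L U r p powr p * (K * eta powr p)
           + 2 * \<sigma> powr p"
        using KC KD by (simp add: algebra_simps)
      also have "\<dots> \<le> 2 * (Ct1 L U r p * \<sigma> powr p) + Dt1 L U r p * (K * eta powr p) + 2 * \<sigma> powr p"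
        using CF(13,14) K0 by (intro add_mono mult_left_mono mult_right_mono) auto
      also have "\<dots> = Q1 + Q2" unfolding Q1_def Q2_def by (simp add: algebra_simps)
      finally show ?thesis .
    qed
    have "dist_q p xs x \<le> lp_norm p d" unfolding d_def by (rule dist_q_le[OF c(1)])
    also have "\<dots> = psum p d UNIV powr (1/p)" by (rule lp_norm_psum)
    also have "\<dots> \<le> (Q1 + Q2) powr (1/p)" using PdQ hp by (intro powr_mono2) (auto simp: psum_nonneg)
    also have "\<dots> \<le> 2 powr (1/p - 1) * (Q1 powr (1/p) + Q2 powr (1/p))"
      using hp Q10 Q20 by (intro pw_conv2) auto
    also have "Q1 powr (1/p) = (2 * Ct1 L U r p + 2) powr (1/p) * \<sigma>"
      unfolding Q1_def using CF(7) \<sigma>0 hp by (simp add: powr_mult powr_inv_p)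
    also have "Q2 powr (1/p) = Dt1 L U r p powr (1/p) * (s * eta)"
      unfolding Q2_def using CF(8) K0 he hp Ks by (simp add: powr_mult powr_inv_p)
    also have "2 powr (1/p - 1) * ((2 * Ct1 L U r p + 2) powr (1/p) * \<sigma> + Dt1 L U r p powr (1/p) * (s * eta))
        = C1 L U r p * \<sigma> + D1 L U r p * s * eta"
      unfolding C1_def D1_def by (simp add: algebra_simps)
    also have "\<dots> \<le> C1 L U r p * sigma_k k p x + D1 L U r p * s * eta"
      using CF(9) \<sigma>_le by simp
    finally show ?thesis unfolding s_def \<beta>_def .
  qed
  show ?thesis using conc1 conc2 by blast
qed



lemma full_gen:
  fixes A :: "'a::{real_normed_field,heine_borel}^'n^'m" and p r L U :: real and k :: nat
  assumes hp: "0 < p" "p \<le> 1" and hk: "1 \<le> k" "k \<le> CARD('n)" and hr: "0 < r"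
    and hLU: "0 < L" "0 < U"
    and hcond: "L - U * 2 powr (1/p - 1) * (2 / r) powr (1/p - 1/2) > 0"
    and bl: "phaseless_bilip A (sparse_set ((r + 4) * real k)) L U"
  shows "0 < C1 L U r p \<and> 0 < D1 L U r p \<and> 0 < C2 L U r p \<and> 0 < D2 L U r p \<and>
      (\<forall>x eta e xs. 0 \<le> eta \<longrightarrow> norm e \<le> eta \<longrightarrow> xs \<in> Delta A p eta (absvec (A *v x) + e) \<longrightarrow>
         dist_q p xs x \<le> C1 L U r p * sigma_k k p x + D1 L U r p * real k powr (1/p - 1/2) * eta \<and>
         dist2 xs x \<le> C2 L U r p * sigma_k k p x / real k powr (1/p - 1/2) + D2 L U r p * eta)"
proof -
  have one_le: "1 \<le> (r + 4) * real k"
  proof -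
    have "1 * 1 \<le> (r + 4) * real k" by (rule mult_mono) (use hk hr in auto)
    then show ?thesis by simp
  qed
  have LU: "L \<le> U" using bilip_LU[OF bl one_le] .
  note CF = consts_facts[OF hp hr hLU LU hcond]
  show ?thesis
    using CF(9-12) main_gen[OF hp hk hr hLU hcond bl] by blast
qed

theorem theorem2p2:
  fixes p r L U :: real and k :: nat
  assumes hp: "0 < p" "p \<le> 1"
    and hk: "1 \<le> k" "k \<le> CARD('n)"
    and hr: "0 < r"
    and hLU: "0 < L" "0 < U"
    and hcond: "L - U * 2 powr (1/p - 1) * (2 / r) powr (1/p - 1/2) > 0"
  shows
   "(\<forall>(A :: real ^ 'n ^ 'm). phaseless_bilip A (sparse_set ((r + 4) * real k)) L U \<longrightarrow>
      0 < C1 L U r p \<and> 0 < D1 L U r p \<and> 0 < C2 L U r p \<and> 0 < D2 L U r p \<and>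
      (\<forall>x eta e xs. 0 \<le> eta \<longrightarrow> norm e \<le> eta \<longrightarrow> xs \<in> Delta A p eta (absvec (A *v x) + e) \<longrightarrow>
         dist_q p xs x \<le> C1 L U r p * sigma_k k p x + D1 L U r p * real k powr (1/p - 1/2) * eta \<and>
         dist2 xs x \<le> C2 L U r p * sigma_k k p x / real k powr (1/p - 1/2) + D2 L U r p * eta))
    \<and>
    (\<forall>(A :: complex ^ 'n ^ 'm). phaseless_bilip A (sparse_set ((r + 4) * real k)) L U \<longrightarrow>
      0 < C1 L U r p \<and> 0 < D1 L U r p \<and> 0 < C2 L U r p \<and> 0 < D2 L U r p \<and>
      (\<forall>x eta e xs. 0 \<le> eta \<longrightarrow> norm e \<le> eta \<longrightarrow> xs \<in> Delta A p eta (absvec (A *v x) + e) \<longrightarrow>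
         dist_q p xs x \<le> C1 L U r p * sigma_k k p x + D1 L U r p * real k powr (1/p - 1/2) * eta \<and>
         dist2 xs x \<le> C2 L U r p * sigma_k k p x / real k powr (1/p - 1/2) + D2 L U r p * eta))"
proof (rule conjI)
  show "\<forall>(A :: real ^ 'n ^ 'm). phaseless_bilip A (sparse_set ((r + 4) * real k)) L U \<longrightarrow>
      0 < C1 L U r p \<and> 0 < D1 L U r p \<and> 0 < C2 L U r p \<and> 0 < D2 L U r p \<and>
      (\<forall>x eta e xs. 0 \<le> eta \<longrightarrow> norm e \<le> eta \<longrightarrow> xs \<in> Delta A p eta (absvec (A *v x) + e) \<longrightarrow>
         dist_q p xs x \<le> C1 L U r p * sigma_k k p x + D1 L U r p * real k powr (1/p - 1/2) * eta \<and>
         dist2 xs x \<le> C2 L U r p * sigma_k k p x / real k powr (1/p - 1/2) + D2 L U r p * eta)"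
    using full_gen[OF hp hk hr hLU hcond] by blast
  show "\<forall>(A :: complex ^ 'n ^ 'm). phaseless_bilip A (sparse_set ((r + 4) * real k)) L U \<longrightarrow>
      0 < C1 L U r p \<and> 0 < D1 L U r p \<and> 0 < C2 L U r p \<and> 0 < D2 L U r p \<and>
      (\<forall>x eta e xs. 0 \<le> eta \<longrightarrow> norm e \<le> eta \<longrightarrow> xs \<in> Delta A p eta (absvec (A *v x) + e) \<longrightarrow>
         dist_q p xs x \<le> C1 L U r p * sigma_k k p x + D1 L U r p * real k powr (1/p - 1/2) * eta \<and>
         dist2 xs x \<le> C2 L U r p * sigma_k k p x / real k powr (1/p - 1/2) + D2 L U r p * eta)"
    using full_gen[OF hp hk hr hLU hcond] by blast
qed


end
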